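(* Over a finite field $\mathbb{F}_q$, let $N_{\mathbb{E}_6}$ and $N_{\mathbb{E}_8}$ be the numbers of $\mathbb{F}_q$-points of $X_{\mathbb{E}_6}(1,\dots,1)$ and $X_{\mathbb{E}_8}(1,\dots,1)$, and for $\alpha\in\mathbb{F}_q^*$ let $N_{\mathbb{E}_7}(\alpha)$ be the number of $\mathbb{F}_q$-points of $X_{\mathbb{E}_7}(1,\dots,1,\alpha)$, where $\alpha$ is the value on the leaf of the long branch of $\mathbb{E}_7$ and all other values are $1$. Then $N_{\mathbb{E}_6}=q^6+q^4+q^3+q^2+1$; $N_{\mathbb{E}_7}(\alpha)=q^7+q^5-q^2-1$ if $\alpha\neq-1$; $N_{\mathbb{E}_7}(-1)=q^7+2q^5+q^3-q^2-1$; and $N_{\mathbb{E}_8}=q^8+q^6+q^5+q^4+q^3+q^2+1$.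
   Context: For a finite tree $T$ and a family $\boldsymbol{\alpha}=(\alpha_t)_{t\in T}$ of invertible elements of a field, $X_T(\boldsymbol{\alpha})$ is the affine variety with coordinates $x_t,x'_t$ ($t\in T$) defined by $x_tx'_t=1+\alpha_t\prod_{s-t}x_s$, the product over the neighbors $s$ of $t$. For $m=6,7,8$, $\mathbb{E}_m$ is the tree with a central vertex from which three branches (paths) emanate, containing $1$, $2$ and $m-4$ further vertices respectively; the long branch is the one with $m-4$ vertices. *)

theory Defs
  imports "HOL-Library.FuncSet"
begin

text \<open>A finite tree is given by a finite vertex set V and a symmetric adjacency
  relation adj.\<close>

definition tree_var_points ::
  "nat set \<Rightarrow> (nat \<Rightarrow> nat \<Rightarrow> bool) \<Rightarrow> (nat \<Rightarrow> 'a::field)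
     \<Rightarrow> ((nat \<Rightarrow> 'a) \<times> (nat \<Rightarrow> 'a)) set" where
  "tree_var_points V adj \<alpha> =
     {(x, x'). x \<in> V \<rightarrow>\<^sub>E UNIV \<and> x' \<in> V \<rightarrow>\<^sub>E UNIV \<and>
        (\<forall>t\<in>V. x t * x' t = 1 + \<alpha> t * (\<Prod>s\<in>{s\<in>V. adj s t}. x s))}"

text \<open>The tree E_m on vertices 0..m-1: centre 0; short branch {1};
  branch of length two 0-2-3; long branch 0-4-5-...-(m-1), whose leaf is m-1.\<close>

definition E_edges :: "nat \<Rightarrow> (nat \<times> nat) set" where
  "E_edges m = {(0,1),(0,2),(2,3),(0,4)} \<union> {(i, i+1) | i. 4 \<le> i \<and> i + 1 < m}"

definition E_adj :: "nat \<Rightarrow> nat \<Rightarrow> nat \<Rightarrow> bool" where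
  "E_adj m s t \<longleftrightarrow> (s, t) \<in> E_edges m \<or> (t, s) \<in> E_edges m"

definition E_points :: "nat \<Rightarrow> (nat \<Rightarrow> 'a::field) \<Rightarrow> ((nat \<Rightarrow> 'a) \<times> (nat \<Rightarrow> 'a)) set" where
  "E_points m \<alpha> = tree_var_points {0..<m} (E_adj m) \<alpha>"

end

theory Submission
  imports Defs
begin

definition gg :: "'a::{finite,field} \<Rightarrow> 'a \<Rightarrow> int" where
  "gg a c = (if a \<noteq> 0 then 1 else if c = 0 then int (card (UNIV::'a set)) else 0)"

lemma card_sol: "int (card {b::'a::{finite,field}. a * b = c}) = gg a c"
proof (cases "a = 0")
  case True
  then show ?thesis by (cases "c = 0") (auto simp: gg_def)
next
  case False
  then have "{b. a * b = c} = {c / a}" by (auto simp: field_simps)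
  then show ?thesis using False by (simp add: gg_def)
qed

lemma card_tree:
  fixes \<alpha> :: "nat \<Rightarrow> 'a::{finite,field}"
  assumes "finite V"
  shows "int (card (tree_var_points V adj \<alpha>)) =
    (\<Sum>x\<in>V \<rightarrow>\<^sub>E UNIV. \<Prod>t\<in>V. gg (x t) (1 + \<alpha> t * (\<Prod>s\<in>{s\<in>V. adj s t}. x s)))"
proof -
  have eq: "tree_var_points V adj \<alpha> = Sigma (V \<rightarrow>\<^sub>E UNIV)
     (\<lambda>x. \<Pi>\<^sub>E t\<in>V. {b. x t * b = 1 + \<alpha> t * (\<Prod>s\<in>{s\<in>V. adj s t}. x s)})"
    unfolding tree_var_points_def by (auto simp: PiE_iff extensional_def)
  have fin: "finite (V \<rightarrow>\<^sub>E (UNIV::'a set))" using assms by (simp add: finite_PiE)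
  have "card (tree_var_points V adj \<alpha>) = (\<Sum>x\<in>V \<rightarrow>\<^sub>E UNIV. card (\<Pi>\<^sub>E t\<in>V. {b. x t * b = 1 + \<alpha> t * (\<Prod>s\<in>{s\<in>V. adj s t}. x s)}))"
    unfolding eq using fin by (intro card_SigmaI) (auto intro: finite_PiE assms)
  also have "\<dots> = (\<Sum>x\<in>V \<rightarrow>\<^sub>E UNIV. \<Prod>t\<in>V. card {b. x t * b = 1 + \<alpha> t * (\<Prod>s\<in>{s\<in>V. adj s t}. x s)})"
    using assms by (simp add: card_PiE)
  finally show ?thesis by (simp add: of_nat_sum of_nat_prod card_sol)
qed

lemma sum_PiE_insert:
  fixes f :: "(nat \<Rightarrow> 'a::finite) \<Rightarrow> int"
  assumes "i \<notin> A"
  shows "(\<Sum>x\<in>insert i A \<rightarrow>\<^sub>E UNIV. f x) = (\<Sum>a\<in>UNIV. \<Sum>x\<in>A \<rightarrow>\<^sub>E UNIV. f (x(i:=a)))"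
proof -
  have "(\<Sum>x\<in>insert i A \<rightarrow>\<^sub>E UNIV. f x) = (\<Sum>p\<in>UNIV \<times> (A \<rightarrow>\<^sub>E UNIV). f ((\<lambda>(y, g). g(i := y)) p))"
    unfolding PiE_insert_eq
    by (subst sum.reindex) (use inj_combinator[OF assms, of "\<lambda>_. UNIV"] in auto)
  also have "\<dots> = (\<Sum>a\<in>UNIV. \<Sum>x\<in>A \<rightarrow>\<^sub>E UNIV. f (x(i:=a)))"
    by (simp add: sum.cartesian_product case_prod_beta)
  finally show ?thesis .
qed

lemma gg_nz[simp]: "a \<noteq> 0 \<Longrightarrow> gg a c = 1" by (simp add: gg_def)
lemma gg_0: "gg (0::'a::{finite,field}) c = (if c = 0 then int (card (UNIV::'a set)) else 0)" by (simp add: gg_def)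
lemma gg_one: "gg (a::'a::{finite,field}) 1 = (if a \<noteq> 0 then 1 else 0)" by (simp add: gg_def)

lemma split0: "(\<Sum>y\<in>UNIV. f y) = f (0::'a::{finite,field}) + (\<Sum>y\<in>UNIV-{0}. f y)"
  by (simp add: sum.remove[of UNIV 0])

lemma card_nz: "int (card (UNIV - {0::'a::{finite,field}})) = int (card (UNIV::'a set)) - 1"
proof -
  have "card (UNIV - {0::'a}) = card (UNIV::'a set) - 1" by (simp add: card_Diff_singleton)
  moreover have "card (UNIV::'a set) \<ge> 1" using card_0_eq[of "UNIV::'a set"] by fastforce
  ultimately show ?thesis by simp
qed

lemma card_ge1[simp]: "Suc 0 \<le> card (UNIV::'a::{finite,field} set)"
  using card_0_eq[of "UNIV::'a set"] by fastforce

lemma card_nz2[simp]: "int (card (UNIV::'a::{finite,field} set) - Suc 0) = int (card (UNIV::'a set)) - 1"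
  using card_nz[where 'a='a] by (simp add: card_Diff_singleton)

lemma sum_nz_const: "(\<Sum>y\<in>UNIV-{0::'a::{finite,field}}. (k::int)) = (int (card (UNIV::'a set)) - 1) * k"
  using card_nz[where 'a='a] by simp

lemma sum_nz_ifeq: "(\<Sum>y\<in>UNIV-{0::'a::{finite,field}}. if y = a then (k::int) else 0) = (if a \<noteq> 0 then k else 0)"
  by (simp add: sum.delta)

lemma sum_all_ifeq: "(\<Sum>y\<in>UNIV. if y = (a::'a::{finite,field}) then (k::int) else 0) = k"
  by (simp add: sum.delta)

lemma lin_eq: "(b::'a::field) \<noteq> 0 \<Longrightarrow> (1 + b * y = 0) = (y = - 1 / b)"
proof
  assume "b \<noteq> 0" "1 + b * y = 0"
  then have "b * y = -1" by (simp add: add_eq_0_iff)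
  then show "y = -1/b" using \<open>b \<noteq> 0\<close> by (metis nonzero_mult_div_cancel_left divide_minus_left)
next
  assume "b \<noteq> 0" "y = -1/b"
  then show "1 + b * y = 0" by simp
qed

lemma sum_gg: "(\<Sum>y\<in>UNIV. gg (y::'a::{finite,field}) c) = int (card (UNIV::'a set)) - 1 + (if c = 0 then int (card (UNIV::'a set)) else 0)"
  by (subst split0) (simp add: sum_nz_const gg_0)

lemma sum_lin_nz: "(\<Sum>y\<in>UNIV-{0::'a::{finite,field}}. if 1 + b * y = 0 then (k::int) else 0) = (if b \<noteq> 0 then k else 0)"
proof (cases "b = 0")
  case False
  then show ?thesis by (simp add: lin_eq sum_nz_ifeq)
qed simp

lemma sum_lin_all: "(\<Sum>y\<in>UNIV. if 1 + b * (y::'a::{finite,field}) = 0 then (k::int) else 0) = (if b \<noteq> 0 then k else 0)"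
proof (cases "b = 0")
  case False
  then show ?thesis by (simp add: lin_eq sum_all_ifeq)
qed simp

lemma centre_sum: "(\<Sum>y\<in>UNIV. gg (0::'a::{finite,field}) (1 + b * y) * gg y 1) = (if b \<noteq> 0 then int (card (UNIV::'a set)) else 0)"
proof -
  have "(\<Sum>y\<in>UNIV. gg (0::'a) (1 + b * y) * gg y 1) = (\<Sum>y\<in>UNIV. if 1 + b * y = 0 then int (card (UNIV::'a set)) else 0)"
    by (rule sum.cong) (auto simp: gg_one gg_0)
  also have "\<dots> = (if b \<noteq> 0 then int (card (UNIV::'a set)) else 0)" by (rule sum_lin_all)
  finally show ?thesis .
qed

lemma P1: "(\<Sum>y\<in>UNIV. gg (y::'a::{finite,field}) (1 + b)) = int (card (UNIV::'a set)) - 1 + (if b = -1 then int (card (UNIV::'a set)) else 0)"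
  by (simp add: sum_gg add_eq_0_iff)

lemma P2: "(\<Sum>y\<in>UNIV. \<Sum>z\<in>UNIV. gg y (1 + \<beta> * z) * gg (z::'a::{finite,field}) (1 + \<gamma> * y)) =
   (int (card (UNIV::'a set)) - 1)^2 + (if \<beta> \<noteq> 0 then int (card (UNIV::'a set)) else 0) + (if \<gamma> \<noteq> 0 then int (card (UNIV::'a set)) else 0)"
proof -
  have "(\<Sum>y\<in>UNIV. \<Sum>z\<in>UNIV. gg y (1 + \<beta> * z) * gg (z::'a) (1 + \<gamma> * y)) =
     (\<Sum>z\<in>UNIV. gg 0 (1 + \<beta> * z) * gg (z::'a) 1) + (\<Sum>y\<in>UNIV-{0::'a}. \<Sum>z\<in>UNIV. gg (z::'a) (1 + \<gamma> * y))"
    by (subst split0) simp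
  also have "\<dots> = (if \<beta> \<noteq> 0 then int (card (UNIV::'a set)) else 0) + (\<Sum>y\<in>UNIV-{0}. int (card (UNIV::'a set)) - 1 + (if 1 + \<gamma> * y = 0 then int (card (UNIV::'a set)) else 0))"
    by (simp add: centre_sum sum_gg)
  also have "\<dots> = (if \<beta> \<noteq> 0 then int (card (UNIV::'a set)) else 0) + ((int (card (UNIV::'a set)) - 1)*(int (card (UNIV::'a set))-1) + (if \<gamma> \<noteq> 0 then int (card (UNIV::'a set)) else 0))"
    by (simp add: sum.distrib sum_nz_const sum_lin_nz)
  finally show ?thesis by (simp add: power2_eq_square)
qed

lemma P3:
  fixes \<alpha> \<beta> :: "'a::{finite,field}"
  assumes "\<alpha> \<noteq> 0"
  shows "(\<Sum>y\<in>UNIV. \<Sum>z\<in>UNIV. \<Sum>w\<in>UNIV. gg y (1 + \<beta> * z) * (gg z (1 + y * w) * gg w (1 + \<alpha> * z))) =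
    (int (card (UNIV::'a set)) - 1) * (int (card (UNIV::'a set))^2 + 1) + (if \<beta> \<noteq> 0 then int (card (UNIV::'a set)) * (int (card (UNIV::'a set)) - 1) + (if \<alpha> = \<beta> then int (card (UNIV::'a set))^2 else 0) else 0)"
proof -
  have A: "(\<Sum>w\<in>UNIV. gg 0 (1 + \<beta> * z) * (gg z 1 * gg w (1 + \<alpha> * z))) =
     (if 1 + \<beta> * z = 0 then int (card (UNIV::'a set)) * (int (card (UNIV::'a set)) - 1 + (if 1 + \<alpha> * z = 0 then int (card (UNIV::'a set)) else 0)) else 0)" for z
  proof (cases "z = 0")
    case True then show ?thesis by (simp add: gg_0 gg_one)
  next
    case False then show ?thesis by (simp add: gg_0 gg_one sum_gg flip: sum_distrib_left)
  qed
  have B: "(\<Sum>z\<in>UNIV. if 1 + \<beta> * z = 0 then int (card (UNIV::'a set)) * (int (card (UNIV::'a set)) - 1 + (if 1 + \<alpha> * z = 0 then int (card (UNIV::'a set)) else 0)) else 0)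
     = (if \<beta> \<noteq> 0 then int (card (UNIV::'a set)) * (int (card (UNIV::'a set)) - 1) + (if \<alpha> = \<beta> then int (card (UNIV::'a set))^2 else 0) else 0)"
  proof (cases "\<beta> = 0")
    case False
    have e: "(1 + \<alpha> * (- 1 / \<beta>) = 0) = (\<alpha> = \<beta>)" using False by (auto simp: field_simps)
    have "(\<Sum>z\<in>UNIV. if 1 + \<beta> * z = 0 then int (card (UNIV::'a set)) * (int (card (UNIV::'a set)) - 1 + (if 1 + \<alpha> * z = 0 then int (card (UNIV::'a set)) else 0)) else 0)
      = (\<Sum>z\<in>UNIV. if z = - 1 / \<beta> then int (card (UNIV::'a set)) * (int (card (UNIV::'a set)) - 1 + (if 1 + \<alpha> * z = 0 then int (card (UNIV::'a set)) else 0)) else 0)"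
      by (rule sum.cong) (simp_all only: lin_eq[OF False])
    also have "\<dots> = int (card (UNIV::'a set)) * (int (card (UNIV::'a set)) - 1 + (if 1 + \<alpha> * (- 1 / \<beta>) = 0 then int (card (UNIV::'a set)) else 0))"
      by (subst sum.delta) auto
    also have "\<dots> = int (card (UNIV::'a set)) * (int (card (UNIV::'a set)) - 1 + (if \<alpha> = \<beta> then int (card (UNIV::'a set)) else 0))" by (simp only: e)
    finally show ?thesis using False by (simp add: power2_eq_square algebra_simps)
  qed simp
  have C: "(\<Sum>z\<in>UNIV. \<Sum>w\<in>UNIV. gg z (1 + y * w) * gg w (1 + \<alpha> * z)) = (int (card (UNIV::'a set)) - 1)^2 + int (card (UNIV::'a set)) + int (card (UNIV::'a set))" if "y \<noteq> 0" for y :: 'a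
    using P2[of y \<alpha>] that assms by simp
  have "(\<Sum>y\<in>UNIV. \<Sum>z\<in>UNIV. \<Sum>w\<in>UNIV. gg y (1 + \<beta> * z) * (gg z (1 + y * w) * gg w (1 + \<alpha> * z))) =
     (\<Sum>z\<in>UNIV. \<Sum>w\<in>UNIV. gg 0 (1 + \<beta> * z) * (gg z 1 * gg w (1 + \<alpha> * z))) +
     (\<Sum>y\<in>UNIV-{0::'a}. \<Sum>z\<in>UNIV. \<Sum>w\<in>UNIV. gg z (1 + y * w) * gg w (1 + \<alpha> * z))"
    by (subst split0) simp
  also have "\<dots> = (if \<beta> \<noteq> 0 then int (card (UNIV::'a set)) * (int (card (UNIV::'a set)) - 1) + (if \<alpha> = \<beta> then int (card (UNIV::'a set))^2 else 0) else 0) +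
     (\<Sum>y\<in>UNIV-{0::'a}. (int (card (UNIV::'a set)) - 1)^2 + int (card (UNIV::'a set)) + int (card (UNIV::'a set)))"
    using A B C by (simp add: of_nat_diff)
  also have "\<dots> = (int (card (UNIV::'a set)) - 1) * (int (card (UNIV::'a set))^2 + 1) + (if \<beta> \<noteq> 0 then int (card (UNIV::'a set)) * (int (card (UNIV::'a set)) - 1) + (if \<alpha> = \<beta> then int (card (UNIV::'a set))^2 else 0) else 0)"
    by (simp add: sum_nz_const power2_eq_square algebra_simps)
  finally show ?thesis .
qed

lemma P4:
  fixes \<beta> :: "'a::{finite,field}"
  assumes "\<beta> \<noteq> 0"
  shows "(\<Sum>y\<in>UNIV. \<Sum>z\<in>UNIV. \<Sum>w\<in>UNIV. \<Sum>v\<in>UNIV. gg y (1 + \<beta> * z) * (gg z (1 + y * w) * (gg w (1 + z * v) * gg v (1 + w)))) =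
    int (card (UNIV::'a set))^4 + int (card (UNIV::'a set))^2 + 1"
proof -
  have A: "(\<Sum>w\<in>UNIV. \<Sum>v\<in>UNIV. gg 0 (1 + \<beta> * z) * (gg z 1 * (gg w (1 + z * v) * gg v (1 + w)))) =
     (if 1 + \<beta> * z = 0 then int (card (UNIV::'a set)) * ((int (card (UNIV::'a set)) - 1)^2 + int (card (UNIV::'a set)) + int (card (UNIV::'a set))) else 0)" for z
  proof (cases "z = 0")
    case True then show ?thesis by (simp add: gg_0 gg_one)
  next
    case False
    have "(\<Sum>w\<in>UNIV. \<Sum>v\<in>UNIV. gg w (1 + z * v) * gg v (1 + 1 * w)) = (int (card (UNIV::'a set)) - 1)^2 + int (card (UNIV::'a set)) + int (card (UNIV::'a set))"
      using P2[of z 1] False by simp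
    with False show ?thesis by (simp add: gg_0 gg_one flip: sum_distrib_left)
  qed
  have C: "(\<Sum>z\<in>UNIV. \<Sum>w\<in>UNIV. \<Sum>v\<in>UNIV. gg z (1 + y * w) * (gg w (1 + z * v) * gg v (1 + w))) =
     (int (card (UNIV::'a set)) - 1) * (int (card (UNIV::'a set))^2 + 1) + int (card (UNIV::'a set)) * (int (card (UNIV::'a set)) - 1) + (if y = 1 then int (card (UNIV::'a set))^2 else 0)" if "y \<noteq> 0" for y :: 'a
    using P3[of 1 y] that by (simp add: add.assoc)
  have "(\<Sum>y\<in>UNIV. \<Sum>z\<in>UNIV. \<Sum>w\<in>UNIV. \<Sum>v\<in>UNIV. gg y (1 + \<beta> * z) * (gg z (1 + y * w) * (gg w (1 + z * v) * gg v (1 + w)))) =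
     (\<Sum>z\<in>UNIV. \<Sum>w\<in>UNIV. \<Sum>v\<in>UNIV. gg 0 (1 + \<beta> * z) * (gg z 1 * (gg w (1 + z * v) * gg v (1 + w)))) +
     (\<Sum>y\<in>UNIV-{0::'a}. \<Sum>z\<in>UNIV. \<Sum>w\<in>UNIV. \<Sum>v\<in>UNIV. gg z (1 + y * w) * (gg w (1 + z * v) * gg v (1 + w)))"
    by (subst split0[of "\<lambda>y. \<Sum>z\<in>UNIV. \<Sum>w\<in>UNIV. \<Sum>v\<in>UNIV. gg y (1 + \<beta> * z) * (gg z (1 + y * w) * (gg w (1 + z * v) * gg v (1 + w)))"]) simp
  also have "\<dots> = int (card (UNIV::'a set)) * ((int (card (UNIV::'a set)) - 1)^2 + int (card (UNIV::'a set)) + int (card (UNIV::'a set))) +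
     (\<Sum>y\<in>UNIV-{0::'a}. (int (card (UNIV::'a set)) - 1) * (int (card (UNIV::'a set))^2 + 1) + int (card (UNIV::'a set)) * (int (card (UNIV::'a set)) - 1) + (if y = 1 then int (card (UNIV::'a set))^2 else 0))"
    using A C assms by (simp add: lin_eq sum_all_ifeq)
  also have "\<dots> = int (card (UNIV::'a set))^4 + int (card (UNIV::'a set))^2 + 1"
    by (simp only: sum.distrib sum_nz_const sum_nz_ifeq) (simp add: power2_eq_square power4_eq_xxxx algebra_simps)
  finally show ?thesis .
qed

lemma swap4: "(\<Sum>a\<in>UNIV. \<Sum>b\<in>UNIV. \<Sum>c\<in>UNIV. \<Sum>d\<in>UNIV. (T a b c d :: int)) = (\<Sum>b\<in>UNIV. \<Sum>c\<in>UNIV. \<Sum>d\<in>UNIV. \<Sum>a\<in>UNIV. T a b c d)"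
proof -
  have "(\<Sum>a\<in>UNIV. \<Sum>b\<in>UNIV. \<Sum>c\<in>UNIV. \<Sum>d\<in>UNIV. T a b c d) = (\<Sum>b\<in>UNIV. \<Sum>a\<in>UNIV. \<Sum>c\<in>UNIV. \<Sum>d\<in>UNIV. T a b c d)"
    by (rule sum.swap)
  also have "\<dots> = (\<Sum>b\<in>UNIV. \<Sum>c\<in>UNIV. \<Sum>a\<in>UNIV. \<Sum>d\<in>UNIV. T a b c d)"
    by (rule sum.cong[OF refl]) (rule sum.swap)
  also have "\<dots> = (\<Sum>b\<in>UNIV. \<Sum>c\<in>UNIV. \<Sum>d\<in>UNIV. \<Sum>a\<in>UNIV. T a b c d)"
    by (rule sum.cong[OF refl], rule sum.cong[OF refl]) (rule sum.swap)
  finally show ?thesis .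
qed

lemma fac3: "(\<Sum>a1\<in>A. \<Sum>a2\<in>B. \<Sum>a3\<in>C. \<Sum>a4\<in>D. (f a1 :: int) * (g a2 a3 * h a4)) = (\<Sum>a1\<in>A. f a1) * (\<Sum>a2\<in>B. \<Sum>a3\<in>C. g a2 a3) * (\<Sum>a4\<in>D. h a4)"
proof -
  have "(\<Sum>a1\<in>A. \<Sum>a2\<in>B. \<Sum>a3\<in>C. \<Sum>a4\<in>D. f a1 * (g a2 a3 * h a4)) = (\<Sum>a1\<in>A. f a1 * (\<Sum>a2\<in>B. \<Sum>a3\<in>C. g a2 a3 * (\<Sum>a4\<in>D. h a4)))"
    by (simp add: sum_distrib_left)
  also have "\<dots> = (\<Sum>a1\<in>A. f a1) * ((\<Sum>a2\<in>B. \<Sum>a3\<in>C. g a2 a3) * (\<Sum>a4\<in>D. h a4))"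
    by (simp add: sum_distrib_right)
  finally show ?thesis by (simp add: mult.assoc)
qed

lemma fac2: "(\<Sum>a2\<in>B. \<Sum>a3\<in>C. \<Sum>a4\<in>D. (g a2 a3 :: int) * h a4) = (\<Sum>a2\<in>B. \<Sum>a3\<in>C. g a2 a3) * (\<Sum>a4\<in>D. h a4)"
proof -
  have "(\<Sum>a2\<in>B. \<Sum>a3\<in>C. \<Sum>a4\<in>D. (g a2 a3 :: int) * h a4) = (\<Sum>a2\<in>B. \<Sum>a3\<in>C. g a2 a3 * (\<Sum>a4\<in>D. h a4))"
    by (simp add: sum_distrib_left)
  also have "\<dots> = (\<Sum>a2\<in>B. \<Sum>a3\<in>C. g a2 a3) * (\<Sum>a4\<in>D. h a4)"
    by (simp add: sum_distrib_right)
  finally show ?thesis .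
qed

lemma centre_sum2: "(\<Sum>y\<in>UNIV. gg (0::'a::{finite,field}) (1 + y * b) * gg y 1) = (if b \<noteq> 0 then int (card (UNIV::'a set)) else 0)"
  using centre_sum[of b] by (simp add: mult.commute)

lemma BR1: "(\<Sum>y\<in>UNIV. \<Sum>z\<in>UNIV. gg (y::'a::{finite,field}) 1 * gg (z::'a) (1 + y)) = (int (card (UNIV::'a set)) - 1)^2 + int (card (UNIV::'a set))"
proof -
  have "(\<Sum>y\<in>UNIV. \<Sum>z\<in>UNIV. gg (y::'a) 1 * gg (z::'a) (1 + y)) = (\<Sum>y\<in>UNIV-{0::'a}. int (card (UNIV::'a set)) - 1 + (if y = -1 then int (card (UNIV::'a set)) else 0))"
    by (subst split0) (simp add: gg_one P1)
  also have "\<dots> = (int (card (UNIV::'a set)) - 1)^2 + int (card (UNIV::'a set))"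
    by (simp only: sum.distrib sum_nz_const sum_nz_ifeq) (simp add: power2_eq_square)
  finally show ?thesis .
qed

lemma G:
  fixes K :: "'a::{finite,field} \<Rightarrow> 'a \<Rightarrow> int"
  shows "(\<Sum>a0\<in>(UNIV::'a set). \<Sum>a1\<in>(UNIV::'a set). \<Sum>a2\<in>(UNIV::'a set). \<Sum>a3\<in>UNIV. \<Sum>a4\<in>(UNIV::'a set).
      gg a0 (1 + a1 * (a2 * a4)) * gg a1 (1 + a0) * (gg a2 (1 + a0 * a3) * gg a3 (1 + a2)) * K a0 a4) =
    (\<Sum>c\<in>UNIV-{0}. (int (card (UNIV::'a set)) - 1 + (if c = -1 then int (card (UNIV::'a set)) else 0)) * (int (card (UNIV::'a set))^2 + 1) * (\<Sum>a4\<in>(UNIV::'a set). K c a4))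
    + int (card (UNIV::'a set)) * ((int (card (UNIV::'a set)) - 1)^2 + int (card (UNIV::'a set))) * (\<Sum>a4\<in>(UNIV::'a set). if a4 \<noteq> 0 then K 0 a4 else 0)"
proof -
  define f where "f a0 = (\<Sum>a1\<in>(UNIV::'a set). \<Sum>a2\<in>(UNIV::'a set). \<Sum>a3\<in>UNIV. \<Sum>a4\<in>(UNIV::'a set).
      gg a0 (1 + a1 * (a2 * a4)) * gg a1 (1 + a0) * (gg a2 (1 + a0 * a3) * gg a3 (1 + a2)) * K a0 a4)" for a0
  have nz: "f c = (int (card (UNIV::'a set)) - 1 + (if c = -1 then int (card (UNIV::'a set)) else 0)) * (int (card (UNIV::'a set))^2 + 1) * (\<Sum>a4\<in>(UNIV::'a set). K c a4)" if "c \<noteq> 0" for c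
  proof -
    have "f c = (\<Sum>a1\<in>(UNIV::'a set). gg a1 (1 + c)) * (\<Sum>a2\<in>(UNIV::'a set). \<Sum>a3\<in>UNIV. gg a2 (1 + c * a3) * gg a3 (1 + 1 * a2)) * (\<Sum>a4\<in>(UNIV::'a set). K c a4)"
    proof -
      have "f c = (\<Sum>a1\<in>(UNIV::'a set). \<Sum>a2\<in>(UNIV::'a set). \<Sum>a3\<in>UNIV. \<Sum>a4\<in>(UNIV::'a set). gg a1 (1 + c) * ((gg a2 (1 + c * a3) * gg a3 (1 + 1 * a2)) * K c a4))"
        unfolding f_def using that by (intro sum.cong refl) (simp add: mult.assoc)
      also have "\<dots> = (\<Sum>a1\<in>(UNIV::'a set). gg a1 (1 + c)) * (\<Sum>a2\<in>(UNIV::'a set). \<Sum>a3\<in>UNIV. gg a2 (1 + c * a3) * gg a3 (1 + 1 * a2)) * (\<Sum>a4\<in>(UNIV::'a set). K c a4)"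
        by (rule fac3)
      finally show ?thesis .
    qed
    also have "\<dots> = (int (card (UNIV::'a set)) - 1 + (if c = -1 then int (card (UNIV::'a set)) else 0)) * (int (card (UNIV::'a set))^2 + 1) * (\<Sum>a4\<in>(UNIV::'a set). K c a4)"
      unfolding P1 P2 using that by (simp add: power2_eq_square algebra_simps)
    finally show ?thesis .
  qed
  have z: "f 0 = int (card (UNIV::'a set)) * ((int (card (UNIV::'a set)) - 1)^2 + int (card (UNIV::'a set))) * (\<Sum>a4\<in>(UNIV::'a set). if a4 \<noteq> 0 then K 0 a4 else 0)"
  proof -
    have "f 0 = (\<Sum>a2\<in>(UNIV::'a set). \<Sum>a3\<in>UNIV. \<Sum>a4\<in>(UNIV::'a set). \<Sum>a1\<in>(UNIV::'a set).
      gg 0 (1 + a1 * (a2 * a4)) * gg a1 1 * (gg a2 1 * gg a3 (1 + a2)) * K 0 a4)"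
      unfolding f_def by (subst swap4) simp
    also have "\<dots> = (\<Sum>a2\<in>(UNIV::'a set). \<Sum>a3\<in>UNIV. \<Sum>a4\<in>(UNIV::'a set).
      (if a2 * a4 \<noteq> 0 then int (card (UNIV::'a set)) else 0) * (gg a2 1 * gg a3 (1 + a2)) * K 0 a4)"
      by (simp only: centre_sum2 flip: sum_distrib_right)
    also have "\<dots> = (\<Sum>a2\<in>(UNIV::'a set). \<Sum>a3\<in>UNIV. \<Sum>a4\<in>(UNIV::'a set).
      int (card (UNIV::'a set)) * (gg a2 1 * gg a3 (1 + a2)) * (if a4 \<noteq> 0 then K 0 a4 else 0))"
      by (rule sum.cong[OF refl])+ (auto simp: gg_one)
    also have "\<dots> = int (card (UNIV::'a set)) * (\<Sum>a2\<in>(UNIV::'a set). \<Sum>a3\<in>UNIV. \<Sum>a4\<in>(UNIV::'a set). (gg a2 1 * gg a3 (1 + a2)) * (if a4 \<noteq> 0 then K 0 a4 else 0))"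
      by (simp add: mult.assoc sum_distrib_left)
    also have "\<dots> = int (card (UNIV::'a set)) * (\<Sum>a2\<in>(UNIV::'a set). \<Sum>a3\<in>UNIV. gg a2 1 * gg a3 (1 + a2)) * (\<Sum>a4\<in>(UNIV::'a set). if a4 \<noteq> 0 then K 0 a4 else 0)"
      by (subst fac2) (simp only: mult.assoc)
    finally show ?thesis by (simp only: BR1)
  qed
  have "(\<Sum>a0\<in>(UNIV::'a set). f a0) = f 0 + (\<Sum>c\<in>UNIV-{0}. f c)" by (rule split0)
  also have "\<dots> = (\<Sum>c\<in>UNIV-{0}. (int (card (UNIV::'a set)) - 1 + (if c = -1 then int (card (UNIV::'a set)) else 0)) * (int (card (UNIV::'a set))^2 + 1) * (\<Sum>a4\<in>(UNIV::'a set). K c a4))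
    + int (card (UNIV::'a set)) * ((int (card (UNIV::'a set)) - 1)^2 + int (card (UNIV::'a set))) * (\<Sum>a4\<in>(UNIV::'a set). if a4 \<noteq> 0 then K 0 a4 else 0)"
    using nz z by simp
  finally show ?thesis unfolding f_def .
qed

lemma filter_insert: "{s \<in> insert a A. P s} = (if P a then insert a {s\<in>A. P s} else {s\<in>A. P s})"
  by auto

lemma six: "{0..<6::nat} = {0,1,2,3,4,5}" by auto
lemma seven: "{0..<7::nat} = {0,1,2,3,4,5,6}" by auto
lemma eight: "{0..<8::nat} = {0,1,2,3,4,5,6,7}" by auto

lemma nb6_0: "{s\<in>{0..<6::nat}. E_adj 6 s 0} = {1,2,4}" by (auto simp: E_adj_def E_edges_def)
lemma nb6_1: "{s\<in>{0..<6::nat}. E_adj 6 s 1} = {0}" by (auto simp: E_adj_def E_edges_def)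
lemma nb6_2: "{s\<in>{0..<6::nat}. E_adj 6 s 2} = {0,3}" by (auto simp: E_adj_def E_edges_def)
lemma nb6_3: "{s\<in>{0..<6::nat}. E_adj 6 s 3} = {2}" by (auto simp: E_adj_def E_edges_def)
lemma nb6_4: "{s\<in>{0..<6::nat}. E_adj 6 s 4} = {0,5}" by (auto simp: E_adj_def E_edges_def)
lemma nb6_5: "{s\<in>{0..<6::nat}. E_adj 6 s 5} = {4}" by (auto simp: E_adj_def E_edges_def)
lemma prod6: "(\<Prod>t\<in>{0..<6::nat}. (f t::int)) = f 0 * f 1 * f 2 * f 3 * f 4 * f 5" by (simp add: six)

lemma nb7_0: "{s\<in>{0..<7::nat}. E_adj 7 s 0} = {1,2,4}" by (auto simp: E_adj_def E_edges_def)
lemma nb7_1: "{s\<in>{0..<7::nat}. E_adj 7 s 1} = {0}" by (auto simp: E_adj_def E_edges_def)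
lemma nb7_2: "{s\<in>{0..<7::nat}. E_adj 7 s 2} = {0,3}" by (auto simp: E_adj_def E_edges_def)
lemma nb7_3: "{s\<in>{0..<7::nat}. E_adj 7 s 3} = {2}" by (auto simp: E_adj_def E_edges_def)
lemma nb7_4: "{s\<in>{0..<7::nat}. E_adj 7 s 4} = {0,5}" by (auto simp: E_adj_def E_edges_def)
lemma nb7_5: "{s\<in>{0..<7::nat}. E_adj 7 s 5} = {4,6}" by (auto simp: E_adj_def E_edges_def)
lemma nb7_6: "{s\<in>{0..<7::nat}. E_adj 7 s 6} = {5}" by (auto simp: E_adj_def E_edges_def)
lemma prod7: "(\<Prod>t\<in>{0..<7::nat}. (f t::int)) = f 0 * f 1 * f 2 * f 3 * f 4 * f 5 * f 6" by (simp add: seven)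

lemma nb8_0: "{s\<in>{0..<8::nat}. E_adj 8 s 0} = {1,2,4}" by (auto simp: E_adj_def E_edges_def)
lemma nb8_1: "{s\<in>{0..<8::nat}. E_adj 8 s 1} = {0}" by (auto simp: E_adj_def E_edges_def)
lemma nb8_2: "{s\<in>{0..<8::nat}. E_adj 8 s 2} = {0,3}" by (auto simp: E_adj_def E_edges_def)
lemma nb8_3: "{s\<in>{0..<8::nat}. E_adj 8 s 3} = {2}" by (auto simp: E_adj_def E_edges_def)
lemma nb8_4: "{s\<in>{0..<8::nat}. E_adj 8 s 4} = {0,5}" by (auto simp: E_adj_def E_edges_def)
lemma nb8_5: "{s\<in>{0..<8::nat}. E_adj 8 s 5} = {4,6}" by (auto simp: E_adj_def E_edges_def)
lemma nb8_6: "{s\<in>{0..<8::nat}. E_adj 8 s 6} = {5,7}" by (auto simp: E_adj_def E_edges_def)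
lemma nb8_7: "{s\<in>{0..<8::nat}. E_adj 8 s 7} = {6}" by (auto simp: E_adj_def E_edges_def)
lemma prod8: "(\<Prod>t\<in>{0..<8::nat}. (f t::int)) = f 0 * f 1 * f 2 * f 3 * f 4 * f 5 * f 6 * f 7" by (simp add: eight)


lemma sumPiE6: "(\<Sum>x\<in>{0..<6::nat} \<rightarrow>\<^sub>E (UNIV::'a::finite set). (F (x 0) (x 1) (x 2) (x 3) (x 4) (x 5)::int)) = (\<Sum>a0\<in>(UNIV::'a set). \<Sum>a1\<in>(UNIV::'a set). \<Sum>a2\<in>UNIV. \<Sum>a3\<in>UNIV. \<Sum>a4\<in>(UNIV::'a set). \<Sum>a5\<in>UNIV. F a0 a1 a2 a3 a4 a5)"
  by (simp add: six sum_PiE_insert)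

lemma sumPiE7: "(\<Sum>x\<in>{0..<7::nat} \<rightarrow>\<^sub>E (UNIV::'a::finite set). (F (x 0) (x 1) (x 2) (x 3) (x 4) (x 5) (x 6)::int)) = (\<Sum>a0\<in>(UNIV::'a set). \<Sum>a1\<in>(UNIV::'a set). \<Sum>a2\<in>UNIV. \<Sum>a3\<in>UNIV. \<Sum>a4\<in>(UNIV::'a set). \<Sum>a5\<in>UNIV. \<Sum>a6\<in>UNIV. F a0 a1 a2 a3 a4 a5 a6)"
  by (simp add: seven sum_PiE_insert)

lemma sumPiE8: "(\<Sum>x\<in>{0..<8::nat} \<rightarrow>\<^sub>E (UNIV::'a::finite set). (F (x 0) (x 1) (x 2) (x 3) (x 4) (x 5) (x 6) (x 7)::int)) = (\<Sum>a0\<in>(UNIV::'a set). \<Sum>a1\<in>(UNIV::'a set). \<Sum>a2\<in>UNIV. \<Sum>a3\<in>UNIV. \<Sum>a4\<in>(UNIV::'a set). \<Sum>a5\<in>UNIV. \<Sum>a6\<in>UNIV. \<Sum>a7\<in>UNIV. F a0 a1 a2 a3 a4 a5 a6 a7)"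
  by (simp add: eight sum_PiE_insert)

lemma sum_c: "(\<Sum>c\<in>UNIV-{0::'a::{finite,field}}. (int (card (UNIV::'a set)) - 1 + (if c = -1 then int (card (UNIV::'a set)) else 0)) * (X::int)) = ((int (card (UNIV::'a set)) - 1)^2 + int (card (UNIV::'a set))) * X"
proof -
  have "(\<Sum>c\<in>UNIV-{0::'a}. (int (card (UNIV::'a set)) - 1 + (if c = -1 then int (card (UNIV::'a set)) else 0)) * X) = (\<Sum>c\<in>UNIV-{0::'a}. (int (card (UNIV::'a set)) - 1) * X + (if c = -1 then int (card (UNIV::'a set)) * X else 0))"
    by (rule sum.cong) (auto simp: algebra_simps)
  also have "\<dots> = ((int (card (UNIV::'a set)) - 1)^2 + int (card (UNIV::'a set))) * X"
    by (simp only: sum.distrib sum_nz_const sum_nz_ifeq) (simp add: power2_eq_square algebra_simps)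
  finally show ?thesis .
qed

lemma sum_c2:
  assumes "(\<alpha>::'a::{finite,field}) \<noteq> 0"
  shows "(\<Sum>c\<in>UNIV-{0::'a}. (int (card (UNIV::'a set)) - 1 + (if c = -1 then int (card (UNIV::'a set)) else 0)) * (A + (if \<alpha> = c then B else 0))) =
    ((int (card (UNIV::'a set)) - 1)^2 + int (card (UNIV::'a set))) * A + (int (card (UNIV::'a set)) - 1) * B + (if \<alpha> = -1 then int (card (UNIV::'a set)) * B else (0::int))"
proof -
  have "(\<Sum>c\<in>UNIV-{0::'a}. (int (card (UNIV::'a set)) - 1 + (if c = -1 then int (card (UNIV::'a set)) else 0)) * (A + (if \<alpha> = c then B else 0))) =
     (\<Sum>c\<in>UNIV-{0::'a}. (int (card (UNIV::'a set)) - 1 + (if c = -1 then int (card (UNIV::'a set)) else 0)) * A + ((if c = \<alpha> then (int (card (UNIV::'a set)) - 1) * B else 0) + (if c = \<alpha> then (if \<alpha> = -1 then int (card (UNIV::'a set)) * B else 0) else 0)))"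
    by (rule sum.cong) (auto simp: algebra_simps)
  also have "\<dots> = ((int (card (UNIV::'a set)) - 1)^2 + int (card (UNIV::'a set))) * A + ((int (card (UNIV::'a set)) - 1) * B + (if \<alpha> = -1 then int (card (UNIV::'a set)) * B else 0))"
    using assms by (simp only: sum.distrib sum_c sum_nz_ifeq) simp
  finally show ?thesis by simp
qed

lemma E6_count:
  "int (card (E_points 6 (\<lambda>_. 1 :: 'a::{finite,field}))) = int (card (UNIV::'a set))^6 + int (card (UNIV::'a set))^4 + int (card (UNIV::'a set))^3 + int (card (UNIV::'a set))^2 + 1"
proof -
  define K where "K c a4 = (\<Sum>a5\<in>UNIV. gg a4 (1 + c * a5) * gg a5 (1 + a4))" for c a4 :: 'a
  have "int (card (E_points 6 (\<lambda>_. 1 :: 'a))) =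
    (\<Sum>x\<in>{0..<6} \<rightarrow>\<^sub>E UNIV. \<Prod>t\<in>{0..<6}. gg (x t) (1 + (\<lambda>_. 1::'a) t * (\<Prod>s\<in>{s\<in>{0..<6}. E_adj 6 s t}. x s)))"
    unfolding E_points_def by (rule card_tree) simp
  also have "\<dots> = (\<Sum>x\<in>{0..<6::nat} \<rightarrow>\<^sub>E (UNIV::'a set). (\<lambda>a0 a1 a2 a3 a4 a5. gg a0 (1 + a1 * (a2 * a4)) * gg a1 (1 + a0) * (gg a2 (1 + a0 * a3) * gg a3 (1 + a2)) * (gg a4 (1 + a0 * a5) * gg a5 (1 + a4)))
      (x 0) (x 1) (x 2) (x 3) (x 4) (x 5))"
    by (rule sum.cong[OF refl]) (simp only: prod6 nb6_0 nb6_1 nb6_2 nb6_3 nb6_4 nb6_5, simp add: mult_ac)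
  also have "\<dots> = (\<Sum>a0\<in>(UNIV::'a set). \<Sum>a1\<in>(UNIV::'a set). \<Sum>a2\<in>UNIV. \<Sum>a3\<in>UNIV. \<Sum>a4\<in>(UNIV::'a set). \<Sum>a5\<in>UNIV.
      gg a0 (1 + a1 * (a2 * a4)) * gg a1 (1 + a0) * (gg a2 (1 + a0 * a3) * gg a3 (1 + a2)) * (gg a4 (1 + a0 * a5) * gg a5 (1 + a4)))"
    using sumPiE6[of "\<lambda>a0 a1 a2 a3 a4 a5. gg a0 (1 + a1 * (a2 * a4)) * gg a1 (1 + a0) * (gg a2 (1 + a0 * a3) * gg a3 (1 + a2)) * (gg a4 (1 + a0 * a5) * gg (a5::'a) (1 + a4))"] by simp
  also have "\<dots> = (\<Sum>a0\<in>(UNIV::'a set). \<Sum>a1\<in>(UNIV::'a set). \<Sum>a2\<in>UNIV. \<Sum>a3\<in>UNIV. \<Sum>a4\<in>(UNIV::'a set).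
      gg a0 (1 + a1 * (a2 * a4)) * gg a1 (1 + a0) * (gg a2 (1 + a0 * a3) * gg a3 (1 + a2)) * K a0 a4)"
    unfolding K_def by (simp add: sum_distrib_left)
  also have "\<dots> = (\<Sum>c\<in>UNIV-{0}. (int (card (UNIV::'a set)) - 1 + (if c = -1 then int (card (UNIV::'a set)) else 0)) * (int (card (UNIV::'a set))^2 + 1) * (\<Sum>a4\<in>(UNIV::'a set). K c a4))
    + int (card (UNIV::'a set)) * ((int (card (UNIV::'a set)) - 1)^2 + int (card (UNIV::'a set))) * (\<Sum>a4\<in>(UNIV::'a set). if a4 \<noteq> 0 then K 0 a4 else 0)"
    by (rule G)
  also have "\<dots> = (\<Sum>c\<in>UNIV-{0::'a}. (int (card (UNIV::'a set)) - 1 + (if c = -1 then int (card (UNIV::'a set)) else 0)) * ((int (card (UNIV::'a set))^2 + 1) * (int (card (UNIV::'a set))^2 + 1)))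
    + int (card (UNIV::'a set)) * ((int (card (UNIV::'a set)) - 1)^2 + int (card (UNIV::'a set))) * ((int (card (UNIV::'a set)) - 1)^2 + int (card (UNIV::'a set)))"
  proof -
    have "(\<Sum>a4\<in>(UNIV::'a set). K c a4) = int (card (UNIV::'a set))^2 + 1" if "c \<noteq> 0" for c
      unfolding K_def using P2[of c 1] that by (simp add: power2_eq_square algebra_simps)
    moreover have "(\<Sum>a4\<in>(UNIV::'a set). if a4 \<noteq> 0 then K 0 a4 else 0) = (int (card (UNIV::'a set)) - 1)^2 + int (card (UNIV::'a set))"
    proof -
      have "(\<Sum>a4\<in>(UNIV::'a set). if a4 \<noteq> 0 then K 0 a4 else 0) = (\<Sum>a4\<in>(UNIV::'a set). \<Sum>a5\<in>UNIV. gg a4 1 * gg a5 (1 + a4))"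
        unfolding K_def by (rule sum.cong) (auto simp: gg_one)
      then show ?thesis by (simp only: BR1)
    qed
    ultimately show ?thesis by (simp add: mult.assoc)
  qed
  also have "\<dots> = int (card (UNIV::'a set))^6 + int (card (UNIV::'a set))^4 + int (card (UNIV::'a set))^3 + int (card (UNIV::'a set))^2 + 1"
    by (simp only: sum_c) algebra
  finally show ?thesis .
qed

lemma sum_if_nz: "(\<Sum>a\<in>(UNIV::'a::{finite,field} set). if a \<noteq> 0 then X a else 0) = (\<Sum>a\<in>UNIV-{0}. (X a :: int))"
  by (subst split0) simp

lemma E7_count:
  fixes \<alpha> :: "'a::{finite,field}"
  assumes "\<alpha> \<noteq> 0"
  shows "int (card (E_points 7 ((\<lambda>_. 1)(6 := \<alpha>)))) = int (card (UNIV::'a set))^7 + int (card (UNIV::'a set))^5 - int (card (UNIV::'a set))^2 - 1 + (if \<alpha> = -1 then int (card (UNIV::'a set))^5 + int (card (UNIV::'a set))^3 else 0)"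
proof -
  define K where "K c a4 = (\<Sum>a5\<in>UNIV. \<Sum>a6\<in>UNIV. gg a4 (1 + c * a5) * (gg a5 (1 + a4 * a6) * gg a6 (1 + \<alpha> * a5)))" for c a4 :: 'a
  define A where "A = (int (card (UNIV::'a set)) - 1) * (int (card (UNIV::'a set))^2 + 1) + int (card (UNIV::'a set)) * (int (card (UNIV::'a set)) - 1)"
  have "int (card (E_points 7 ((\<lambda>_. 1)(6 := \<alpha>)))) =
    (\<Sum>x\<in>{0..<7} \<rightarrow>\<^sub>E UNIV. \<Prod>t\<in>{0..<7}. gg (x t) (1 + ((\<lambda>_. 1)(6 := \<alpha>)) t * (\<Prod>s\<in>{s\<in>{0..<7}. E_adj 7 s t}. x s)))"
    unfolding E_points_def by (rule card_tree) simp
  also have "\<dots> = (\<Sum>x\<in>{0..<7::nat} \<rightarrow>\<^sub>E (UNIV::'a set). (\<lambda>a0 a1 a2 a3 a4 a5 a6. gg a0 (1 + a1 * (a2 * a4)) * gg a1 (1 + a0) * (gg a2 (1 + a0 * a3) * gg a3 (1 + a2)) * (gg a4 (1 + a0 * a5) * (gg a5 (1 + a4 * a6) * gg a6 (1 + \<alpha> * a5))))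
      (x 0) (x 1) (x 2) (x 3) (x 4) (x 5) (x 6))"
    by (rule sum.cong[OF refl]) (simp only: prod7 nb7_0 nb7_1 nb7_2 nb7_3 nb7_4 nb7_5 nb7_6, simp add: mult_ac)
  also have "\<dots> = (\<Sum>a0\<in>(UNIV::'a set). \<Sum>a1\<in>(UNIV::'a set). \<Sum>a2\<in>(UNIV::'a set). \<Sum>a3\<in>UNIV. \<Sum>a4\<in>(UNIV::'a set). \<Sum>a5\<in>UNIV. \<Sum>a6\<in>UNIV.
      gg a0 (1 + a1 * (a2 * a4)) * gg a1 (1 + a0) * (gg a2 (1 + a0 * a3) * gg a3 (1 + a2)) * (gg a4 (1 + a0 * a5) * (gg a5 (1 + a4 * a6) * gg a6 (1 + \<alpha> * a5))))"
    using sumPiE7[of "\<lambda>a0 a1 a2 a3 a4 a5 a6. gg a0 (1 + a1 * (a2 * a4)) * gg a1 (1 + a0) * (gg a2 (1 + a0 * a3) * gg a3 (1 + a2)) * (gg a4 (1 + a0 * a5) * (gg a5 (1 + a4 * a6) * gg a6 (1 + \<alpha> * a5)))"] by simp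
  also have "\<dots> = (\<Sum>a0\<in>(UNIV::'a set). \<Sum>a1\<in>(UNIV::'a set). \<Sum>a2\<in>(UNIV::'a set). \<Sum>a3\<in>UNIV. \<Sum>a4\<in>(UNIV::'a set).
      gg a0 (1 + a1 * (a2 * a4)) * gg a1 (1 + a0) * (gg a2 (1 + a0 * a3) * gg a3 (1 + a2)) * K a0 a4)"
    unfolding K_def by (simp add: sum_distrib_left)
  also have "\<dots> = (\<Sum>c\<in>UNIV-{0}. (int (card (UNIV::'a set)) - 1 + (if c = -1 then int (card (UNIV::'a set)) else 0)) * (int (card (UNIV::'a set))^2 + 1) * (\<Sum>a4\<in>(UNIV::'a set). K c a4))
    + int (card (UNIV::'a set)) * ((int (card (UNIV::'a set)) - 1)^2 + int (card (UNIV::'a set))) * (\<Sum>a4\<in>(UNIV::'a set). if a4 \<noteq> 0 then K 0 a4 else 0)"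
    by (rule G)
  also have "\<dots> = (\<Sum>c\<in>UNIV-{0::'a}. (int (card (UNIV::'a set)) - 1 + (if c = -1 then int (card (UNIV::'a set)) else 0)) * ((int (card (UNIV::'a set))^2 + 1) * A + (if \<alpha> = c then (int (card (UNIV::'a set))^2 + 1) * int (card (UNIV::'a set))^2 else 0)))
    + int (card (UNIV::'a set)) * ((int (card (UNIV::'a set)) - 1)^2 + int (card (UNIV::'a set))) * ((int (card (UNIV::'a set)) - 1) * ((int (card (UNIV::'a set)) - 1)^2 + int (card (UNIV::'a set)) + int (card (UNIV::'a set))))"
  proof -
    have "(int (card (UNIV::'a set))^2 + 1) * (\<Sum>a4\<in>(UNIV::'a set). K c a4) = (int (card (UNIV::'a set))^2 + 1) * A + (if \<alpha> = c then (int (card (UNIV::'a set))^2 + 1) * int (card (UNIV::'a set))^2 else 0)" if "c \<noteq> 0" for c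
    proof -
      have "(\<Sum>a4\<in>(UNIV::'a set). K c a4) = (int (card (UNIV::'a set)) - 1) * (int (card (UNIV::'a set))^2 + 1) + (int (card (UNIV::'a set)) * (int (card (UNIV::'a set)) - 1) + (if \<alpha> = c then int (card (UNIV::'a set))^2 else 0))"
        unfolding K_def using P3[of \<alpha> c] that assms by simp
      then show ?thesis unfolding A_def by (simp only:) (simp add: algebra_simps)
    qed
    then have 1: "(\<Sum>c\<in>UNIV-{0::'a}. (int (card (UNIV::'a set)) - 1 + (if c = -1 then int (card (UNIV::'a set)) else 0)) * (int (card (UNIV::'a set))^2 + 1) * (\<Sum>a4\<in>(UNIV::'a set). K c a4))
       = (\<Sum>c\<in>UNIV-{0::'a}. (int (card (UNIV::'a set)) - 1 + (if c = -1 then int (card (UNIV::'a set)) else 0)) * ((int (card (UNIV::'a set))^2 + 1) * A + (if \<alpha> = c then (int (card (UNIV::'a set))^2 + 1) * int (card (UNIV::'a set))^2 else 0)))"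
      by (intro sum.cong refl) (simp add: mult.assoc)
    have "(\<Sum>a4\<in>(UNIV::'a set). if a4 \<noteq> 0 then K 0 a4 else 0) = (\<Sum>a4\<in>UNIV-{0::'a}. (int (card (UNIV::'a set)) - 1)^2 + int (card (UNIV::'a set)) + int (card (UNIV::'a set)))"
      unfolding sum_if_nz
    proof (rule sum.cong[OF refl])
      fix a4 :: 'a assume "a4 \<in> UNIV - {0}"
      then show "K 0 a4 = (int (card (UNIV::'a set)) - 1)^2 + int (card (UNIV::'a set)) + int (card (UNIV::'a set))"
        unfolding K_def using P2[of a4 \<alpha>] assms by (simp add: gg_one)
    qed
    also have "\<dots> = (int (card (UNIV::'a set)) - 1) * ((int (card (UNIV::'a set)) - 1)^2 + int (card (UNIV::'a set)) + int (card (UNIV::'a set)))" by (rule sum_nz_const)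
    finally show ?thesis using 1 by simp
  qed
  also have "\<dots> = int (card (UNIV::'a set))^7 + int (card (UNIV::'a set))^5 - int (card (UNIV::'a set))^2 - 1 + (if \<alpha> = -1 then int (card (UNIV::'a set))^5 + int (card (UNIV::'a set))^3 else 0)"
  proof (cases "\<alpha> = -1")
    case True then show ?thesis unfolding sum_c2[OF assms] A_def by (simp only: True simp_thms if_True) algebra
  next
    case False then show ?thesis unfolding sum_c2[OF assms] A_def by (simp only: False simp_thms if_False) algebra
  qed
  finally show ?thesis .
qed

lemma E8_count:
  "int (card (E_points 8 (\<lambda>_. 1 :: 'a::{finite,field}))) = int (card (UNIV::'a set))^8 + int (card (UNIV::'a set))^6 + int (card (UNIV::'a set))^5 + int (card (UNIV::'a set))^4 + int (card (UNIV::'a set))^3 + int (card (UNIV::'a set))^2 + 1"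
proof -
  define K where "K c a4 = (\<Sum>a5\<in>UNIV. \<Sum>a6\<in>UNIV. \<Sum>a7\<in>UNIV. gg a4 (1 + c * a5) * (gg a5 (1 + a4 * a6) * (gg a6 (1 + a5 * a7) * gg a7 (1 + a6))))" for c a4 :: 'a
  have "int (card (E_points 8 (\<lambda>_. 1 :: 'a))) =
    (\<Sum>x\<in>{0..<8} \<rightarrow>\<^sub>E UNIV. \<Prod>t\<in>{0..<8}. gg (x t) (1 + (\<lambda>_. 1::'a) t * (\<Prod>s\<in>{s\<in>{0..<8}. E_adj 8 s t}. x s)))"
    unfolding E_points_def by (rule card_tree) simp
  also have "\<dots> = (\<Sum>x\<in>{0..<8::nat} \<rightarrow>\<^sub>E (UNIV::'a set). (\<lambda>a0 a1 a2 a3 a4 a5 a6 a7. gg a0 (1 + a1 * (a2 * a4)) * gg a1 (1 + a0) * (gg a2 (1 + a0 * a3) * gg a3 (1 + a2)) * (gg a4 (1 + a0 * a5) * (gg a5 (1 + a4 * a6) * (gg a6 (1 + a5 * a7) * gg a7 (1 + a6)))))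
      (x 0) (x 1) (x 2) (x 3) (x 4) (x 5) (x 6) (x 7))"
    by (rule sum.cong[OF refl]) (simp only: prod8 nb8_0 nb8_1 nb8_2 nb8_3 nb8_4 nb8_5 nb8_6 nb8_7, simp add: mult_ac)
  also have "\<dots> = (\<Sum>a0\<in>(UNIV::'a set). \<Sum>a1\<in>(UNIV::'a set). \<Sum>a2\<in>(UNIV::'a set). \<Sum>a3\<in>UNIV. \<Sum>a4\<in>(UNIV::'a set). \<Sum>a5\<in>UNIV. \<Sum>a6\<in>UNIV. \<Sum>a7\<in>UNIV.
      gg a0 (1 + a1 * (a2 * a4)) * gg a1 (1 + a0) * (gg a2 (1 + a0 * a3) * gg a3 (1 + a2)) * (gg a4 (1 + a0 * a5) * (gg a5 (1 + a4 * a6) * (gg a6 (1 + a5 * a7) * gg a7 (1 + a6)))))"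
    using sumPiE8[of "\<lambda>a0 a1 a2 a3 a4 a5 a6 a7. gg a0 (1 + a1 * (a2 * a4)) * gg a1 (1 + a0) * (gg a2 (1 + a0 * a3) * gg a3 (1 + a2)) * (gg a4 (1 + a0 * a5) * (gg a5 (1 + a4 * a6) * (gg a6 (1 + a5 * a7) * gg (a7::'a) (1 + a6))))"] by simp
  also have "\<dots> = (\<Sum>a0\<in>(UNIV::'a set). \<Sum>a1\<in>(UNIV::'a set). \<Sum>a2\<in>(UNIV::'a set). \<Sum>a3\<in>UNIV. \<Sum>a4\<in>(UNIV::'a set).
      gg a0 (1 + a1 * (a2 * a4)) * gg a1 (1 + a0) * (gg a2 (1 + a0 * a3) * gg a3 (1 + a2)) * K a0 a4)"
    unfolding K_def by (simp add: sum_distrib_left)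
  also have "\<dots> = (\<Sum>c\<in>UNIV-{0}. (int (card (UNIV::'a set)) - 1 + (if c = -1 then int (card (UNIV::'a set)) else 0)) * (int (card (UNIV::'a set))^2 + 1) * (\<Sum>a4\<in>(UNIV::'a set). K c a4))
    + int (card (UNIV::'a set)) * ((int (card (UNIV::'a set)) - 1)^2 + int (card (UNIV::'a set))) * (\<Sum>a4\<in>(UNIV::'a set). if a4 \<noteq> 0 then K 0 a4 else 0)"
    by (rule G)
  also have "\<dots> = (\<Sum>c\<in>UNIV-{0::'a}. (int (card (UNIV::'a set)) - 1 + (if c = -1 then int (card (UNIV::'a set)) else 0)) * ((int (card (UNIV::'a set))^2 + 1) * (int (card (UNIV::'a set))^4 + int (card (UNIV::'a set))^2 + 1)))
    + int (card (UNIV::'a set)) * ((int (card (UNIV::'a set)) - 1)^2 + int (card (UNIV::'a set))) * ((int (card (UNIV::'a set)) - 1) * ((int (card (UNIV::'a set)) - 1) * (int (card (UNIV::'a set))^2 + 1) + int (card (UNIV::'a set)) * (int (card (UNIV::'a set)) - 1)) + int (card (UNIV::'a set))^2)"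
  proof -
    have "(\<Sum>a4\<in>(UNIV::'a set). K c a4) = int (card (UNIV::'a set))^4 + int (card (UNIV::'a set))^2 + 1" if "c \<noteq> 0" for c
      unfolding K_def using P4[of c] that by simp
    then have 1: "(\<Sum>c\<in>UNIV-{0::'a}. (int (card (UNIV::'a set)) - 1 + (if c = -1 then int (card (UNIV::'a set)) else 0)) * (int (card (UNIV::'a set))^2 + 1) * (\<Sum>a4\<in>(UNIV::'a set). K c a4))
       = (\<Sum>c\<in>UNIV-{0::'a}. (int (card (UNIV::'a set)) - 1 + (if c = -1 then int (card (UNIV::'a set)) else 0)) * ((int (card (UNIV::'a set))^2 + 1) * (int (card (UNIV::'a set))^4 + int (card (UNIV::'a set))^2 + 1)))"
      by (intro sum.cong refl) (simp add: mult.assoc)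
    have "(\<Sum>a4\<in>(UNIV::'a set). if a4 \<noteq> 0 then K 0 a4 else 0) = (\<Sum>a4\<in>UNIV-{0::'a}. ((int (card (UNIV::'a set)) - 1) * (int (card (UNIV::'a set))^2 + 1) + int (card (UNIV::'a set)) * (int (card (UNIV::'a set)) - 1)) + (if a4 = 1 then int (card (UNIV::'a set))^2 else 0))"
      unfolding sum_if_nz
    proof (rule sum.cong[OF refl])
      fix a4 :: 'a assume "a4 \<in> UNIV - {0}"
      then show "K 0 a4 = ((int (card (UNIV::'a set)) - 1) * (int (card (UNIV::'a set))^2 + 1) + int (card (UNIV::'a set)) * (int (card (UNIV::'a set)) - 1)) + (if a4 = 1 then int (card (UNIV::'a set))^2 else 0)"
        unfolding K_def using P3[of 1 a4] by (simp add: gg_one add.assoc)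
    qed
    also have "\<dots> = (int (card (UNIV::'a set)) - 1) * ((int (card (UNIV::'a set)) - 1) * (int (card (UNIV::'a set))^2 + 1) + int (card (UNIV::'a set)) * (int (card (UNIV::'a set)) - 1)) + int (card (UNIV::'a set))^2"
      by (simp only: sum.distrib sum_nz_const sum_nz_ifeq) (simp add: distrib_left)
    finally show ?thesis using 1 by simp
  qed
  also have "\<dots> = int (card (UNIV::'a set))^8 + int (card (UNIV::'a set))^6 + int (card (UNIV::'a set))^5 + int (card (UNIV::'a set))^4 + int (card (UNIV::'a set))^3 + int (card (UNIV::'a set))^2 + 1"
    by (simp only: sum_c) algebra
  finally show ?thesis .
qed


theorem mainTheorem18:
  fixes q :: int
  assumes "q = int (card (UNIV :: 'a::{finite, field} set))"
  shows "int (card (E_points 6 (\<lambda>_. 1 :: 'a))) = q^6 + q^4 + q^3 + q^2 + 1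
    \<and> (\<forall>\<alpha> :: 'a. \<alpha> \<noteq> 0 \<longrightarrow> \<alpha> \<noteq> -1 \<longrightarrow>
           int (card (E_points 7 ((\<lambda>_. 1)(6 := \<alpha>)))) = q^7 + q^5 - q^2 - 1)
    \<and> int (card (E_points 7 ((\<lambda>_. 1)(6 := -1 :: 'a)))) = q^7 + 2*q^5 + q^3 - q^2 - 1
    \<and> int (card (E_points 8 (\<lambda>_. 1 :: 'a))) = q^8 + q^6 + q^5 + q^4 + q^3 + q^2 + 1"
proof (intro conjI allI impI)
  show "int (card (E_points 6 (\<lambda>_. 1 :: 'a))) = q^6 + q^4 + q^3 + q^2 + 1"
    using E6_count[where 'a='a] assms by simp
  show "int (card (E_points 8 (\<lambda>_. 1 :: 'a))) = q^8 + q^6 + q^5 + q^4 + q^3 + q^2 + 1"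
    using E8_count[where 'a='a] assms by simp
  fix \<alpha> :: 'a
  assume "\<alpha> \<noteq> 0" "\<alpha> \<noteq> -1"
  then show "int (card (E_points 7 ((\<lambda>_. 1)(6 := \<alpha>)))) = q^7 + q^5 - q^2 - 1"
    using E7_count[of \<alpha>] assms by simp
next
  have "(-1::'a) \<noteq> 0" by simp
  then show "int (card (E_points 7 ((\<lambda>_. 1)(6 := -1 :: 'a)))) = q^7 + 2*q^5 + q^3 - q^2 - 1"
    using E7_count[of "-1::'a"] assms by simp
qed

end
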